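(* Let $N\ge2$, $T>0$, and consider the problem of minimizing $\mathbb V(T)=\frac1N\sum_{i=1}^N\xi_i(T)^2$ over $\alpha\in\mathcal U$, where $\dot\xi_i=-\xi_i+(1-\alpha_i)\bar\xi$, $\bar\xi=\frac1N\sum_j\xi_j$, with initial datum satisfying $\bar\xi(0)>0$ and $\xi_1(0)\ge\dots\ge\xi_N(0)$. Let $\bar\xi_{1,N-1}=\frac1{N-1}\sum_{i=1}^{N-1}\xi_i$ and $$t_N=\frac{N}{N-1}\ln\Big(\frac{(N-1)^2}{N}\,\frac{\bar\xi_{1,N-1}(0)-\xi_N(0)}{\bar\xi(0)}+1\Big).$$ If $T\ge t_N$, then every optimal control of this problem belongs to $\mathcal U_{FS}$, and its trajectory satisfies $\xi_i(T)=\bar\xi(T)$ for every $i\in\{1,\dots,N\}$.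
   Context: $\mathcal U$ is the set of measurable $\alpha:[0,T]\to[0,1]^N$ with $\sum_i\alpha_i(t)\le1$ for all $t$; $\mathcal U_{FS}\subset\mathcal U$ is the subset with $\sum_i\alpha_i(t)=1$ for all $t$. *)

theory Defs
  imports "HOL-Analysis.Analysis"
begin

(* Indices of agents are 1..N. A state is x :: nat => real (only 1..N matter).
   A control is alpha :: real => nat => real (time, index);
   a trajectory is xi :: real => nat => real (time, index). *)

definition xbar :: "nat \<Rightarrow> (nat \<Rightarrow> real) \<Rightarrow> real" where
  "xbar N x = (\<Sum>j=1..N. x j) / real N"

definition admissible :: "nat \<Rightarrow> real \<Rightarrow> (real \<Rightarrow> nat \<Rightarrow> real) \<Rightarrow> bool" where
  "admissible N T \<alpha> \<longleftrightarrow>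
     (\<forall>i\<in>{1..N}. (\<lambda>t. \<alpha> t i) \<in> borel_measurable (lebesgue_on {0..T})) \<and>
     (\<forall>t\<in>{0..T}. (\<forall>i\<in>{1..N}. 0 \<le> \<alpha> t i \<and> \<alpha> t i \<le> 1) \<and> (\<Sum>i=1..N. \<alpha> t i) \<le> 1)"

definition full_strength :: "nat \<Rightarrow> real \<Rightarrow> (real \<Rightarrow> nat \<Rightarrow> real) \<Rightarrow> bool" where
  "full_strength N T \<alpha> \<longleftrightarrow> admissible N T \<alpha> \<and> (\<forall>t\<in>{0..T}. (\<Sum>i=1..N. \<alpha> t i) = 1)"

(* xi is the (Caratheodory) trajectory on [0,T] of
   xi_i' = -xi_i + (1 - alpha_i) xbar(xi), xi(0) = x0, in integral form *)
definition is_traj :: "nat \<Rightarrow> real \<Rightarrow> (real \<Rightarrow> nat \<Rightarrow> real) \<Rightarrow> (nat \<Rightarrow> real)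
                        \<Rightarrow> (real \<Rightarrow> nat \<Rightarrow> real) \<Rightarrow> bool" where
  "is_traj N T \<alpha> x0 \<xi> \<longleftrightarrow>
     (\<forall>i\<in>{1..N}. \<xi> 0 i = x0 i) \<and>
     (\<forall>i\<in>{1..N}. \<forall>t\<in>{0..T}.
        ((\<lambda>s. - \<xi> s i + (1 - \<alpha> s i) * xbar N (\<xi> s)) has_integral (\<xi> t i - \<xi> 0 i)) {0..t})"

definition cost :: "nat \<Rightarrow> real \<Rightarrow> (real \<Rightarrow> nat \<Rightarrow> real) \<Rightarrow> real" where
  "cost N T \<xi> = (\<Sum>i=1..N. (\<xi> T i)\<^sup>2) / real N"

definition optimal_control :: "nat \<Rightarrow> real \<Rightarrow> (nat \<Rightarrow> real) \<Rightarrow> (real \<Rightarrow> nat \<Rightarrow> real) \<Rightarrow> bool" where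
  "optimal_control N T x0 \<alpha> \<longleftrightarrow> admissible N T \<alpha> \<and>
     (\<exists>\<xi>. is_traj N T \<alpha> x0 \<xi>) \<and>
     (\<forall>\<xi> \<beta> \<eta>. is_traj N T \<alpha> x0 \<xi> \<longrightarrow> admissible N T \<beta> \<longrightarrow> is_traj N T \<beta> x0 \<eta>
        \<longrightarrow> cost N T \<xi> \<le> cost N T \<eta>)"

end

theory Submission imports Defs begin

lemma comparison_nonneg:
  fixes r :: "real \<Rightarrow> real"
  assumes cont: "continuous_on {a..b} r" and ra: "r a \<ge> 0"
    and step: "\<And>s t. a \<le> s \<Longrightarrow> s \<le> t \<Longrightarrow> t \<le> b \<Longrightarrow> (\<forall>\<tau>\<in>{s..t}. r \<tau> \<le> 0) \<Longrightarrow> r s \<le> r t"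
    and t: "t \<in> {a..b}"
  shows "r t \<ge> 0"
proof (rule ccontr)
  assume neg: "\<not> r t \<ge> 0"
  have at: "a \<le> t" "t \<le> b" using t by auto
  have contt: "continuous_on {a..t} r" by (rule continuous_on_subset[OF cont]) (use at in auto)
  define Z where "Z = {a..t} \<inter> r -` {0}"
  have "\<exists>x. a \<le> x \<and> x \<le> t \<and> (\<lambda>x. - r x) x = 0"
    by (rule IVT') (use ra neg at contt in \<open>auto intro: continuous_intros\<close>)
  then have Zne: "Z \<noteq> {}" unfolding Z_def by auto
  have "closed Z" unfolding Z_def
    by (rule continuous_closed_preimage[OF contt]) auto
  moreover have bdd: "bdd_above Z" unfolding Z_def by (rule bdd_aboveI[of _ t]) auto
  ultimately have sZ: "Sup Z \<in> Z" using Zne closed_contains_Sup by blast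
  define s where "s = Sup Z"
  have s: "a \<le> s" "s \<le> t" "r s = 0" using sZ unfolding s_def Z_def by auto
  have le: "\<forall>\<tau>\<in>{s..t}. r \<tau> \<le> 0"
  proof
    fix \<tau> assume tau: "\<tau> \<in> {s..t}"
    show "r \<tau> \<le> 0"
    proof (rule ccontr)
      assume "\<not> r \<tau> \<le> 0"
      have c2: "continuous_on {\<tau>..t} r" by (rule continuous_on_subset[OF contt]) (use s tau in auto)
      have "\<exists>x. \<tau> \<le> x \<and> x \<le> t \<and> (\<lambda>x. - r x) x = 0"
        by (rule IVT') (use \<open>\<not> r \<tau> \<le> 0\<close> neg tau c2 in \<open>auto intro: continuous_intros\<close>)
      then obtain x where x: "\<tau> \<le> x" "x \<le> t" "r x = 0" by auto
      have "x \<in> Z" unfolding Z_def using x s tau by auto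
      then have "x \<le> s" unfolding s_def using bdd by (rule cSup_upper)
      with x tau have "x = s" "\<tau> = s" by auto
      with s \<open>\<not> r \<tau> \<le> 0\<close> show False by simp
    qed
  qed
  have "r s \<le> r t" using step[OF s(1) s(2) at(2) le] .
  with s neg show False by simp
qed

lemma exp_integral:
  fixes n c a s t :: real
  assumes "s \<le> t" "n > 0"
  shows "((\<lambda>\<tau>. -(1/n) * (c * exp (-(\<tau> - a)/n))) has_integral
          (c * exp (-(t - a)/n) - c * exp (-(s - a)/n))) {s..t}"
proof (rule fundamental_theorem_of_calculus[OF assms(1)])
  fix x assume "x \<in> {s..t}"
  show "((\<lambda>\<tau>. c * exp (-(\<tau> - a)/n)) has_vector_derivative -(1/n) * (c * exp (-(x - a)/n))) (at x within {s..t})"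
    unfolding has_real_derivative_iff_has_vector_derivative[symmetric]
    using assms by (auto intro!: derivative_eq_intros simp: field_simps)
qed

lemma scalar_lemma:
  fixes S m :: "real \<Rightarrow> real" and n T m0 :: real
  assumes n: "n > 0" and T: "T > 0" and m0: "m0 > 0"
    and S: "\<And>\<tau>. \<tau> \<in> {0..T} \<Longrightarrow> 0 \<le> S \<tau> \<and> S \<tau> \<le> 1"
    and m00: "m 0 = m0"
    and intm: "\<And>t. t \<in> {0..T} \<Longrightarrow> ((\<lambda>\<tau>. -(S \<tau> / n) * m \<tau>) has_integral (m t - m 0)) {0..t}"
  shows "m T \<ge> m0 * exp (-(T - 0)/n)"
    and "m T = m0 * exp (-(T - 0)/n) \<Longrightarrow> (AE \<tau> in lebesgue_on {0..T}. S \<tau> = 1)"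
proof -
  define F where "F \<tau> = -(S \<tau> / n) * m \<tau>" for \<tau>
  have intF: "(F has_integral (m t - m0)) {0..t}" if "t \<in> {0..T}" for t
    using intm[OF that] m00 unfolding F_def by simp
  have FintT: "F integrable_on {0..T}" using intF[of T] T by auto
  have mcont: "continuous_on {0..T} m"
  proof -
    have "continuous_on {0..T} (\<lambda>x. m0 + integral {0..x} F)"
      by (intro continuous_intros indefinite_integral_continuous_1 FintT)
    moreover have "m0 + integral {0..x} F = m x" if "x \<in> {0..T}" for x
      using intF[OF that] by (simp add: integral_unique)
    ultimately show ?thesis using continuous_on_eq by blast
  qed
  have incr: "(F has_integral (m t - m s)) {s..t}" if st: "0 \<le> s" "s \<le> t" "t \<le> T" for s t
  proof -
    have "F integrable_on {s..t}"
      by (rule integrable_subinterval_real[OF FintT]) (use st in auto)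
    then obtain J where J: "(F has_integral J) {s..t}" by blast
    have "(F has_integral ((m s - m0) + J)) {0..t}"
      by (rule has_integral_combine[OF st(1) st(2) intF J]) (use st in auto)
    moreover have "(F has_integral (m t - m0)) {0..t}" by (rule intF) (use st in auto)
    ultimately have "(m s - m0) + J = m t - m0" using has_integral_unique by blast
    then have "J = m t - m s" by simp
    with J show ?thesis by simp
  qed
  define e where "e \<tau> = m0 * exp (-(\<tau> - 0)/n)" for \<tau>
  have epos: "e \<tau> > 0" for \<tau> using m0 unfolding e_def by simp
  have eint: "((\<lambda>\<tau>. -(1/n) * e \<tau>) has_integral (e t - e s)) {s..t}" if "s \<le> t" for s t
    unfolding e_def by (rule exp_integral[OF that n])
  define v where "v \<tau> = m \<tau> - e \<tau>" for \<tau>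
  have vint: "((\<lambda>\<tau>. F \<tau> + e \<tau> / n) has_integral (v t - v s)) {s..t}"
    if st: "0 \<le> s" "s \<le> t" "t \<le> T" for s t
  proof -
    have "((\<lambda>\<tau>. F \<tau> - (-(1/n) * e \<tau>)) has_integral ((m t - m s) - (e t - e s))) {s..t}"
      by (rule has_integral_diff[OF incr[OF st] eint]) (use st in auto)
    then show ?thesis unfolding v_def by (simp add: algebra_simps)
  qed
  have econt: "continuous_on {0..T} e" unfolding e_def by (intro continuous_intros) (use n in auto)
  have vcont: "continuous_on {0..T} v" unfolding v_def by (intro continuous_intros mcont econt)
  have v0: "v 0 = 0" unfolding v_def e_def using m00 by simp
  have vnn: "v t \<ge> 0" if t: "t \<in> {0..T}" for t
  proof (rule comparison_nonneg[OF vcont _ _ t])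
    show "0 \<le> v 0" using v0 by simp
    fix s t' assume st: "0 \<le> s" "s \<le> t'" "t' \<le> T" and le: "\<forall>\<tau>\<in>{s..t'}. v \<tau> \<le> 0"
    have "0 \<le> v t' - v s"
    proof (rule has_integral_nonneg[OF vint[OF st]])
      fix \<tau> assume tau: "\<tau> \<in> {s..t'}"
      have S\<tau>: "0 \<le> S \<tau>" "S \<tau> \<le> 1" using S[of \<tau>] tau st by auto
      have v\<tau>: "v \<tau> \<le> 0" using le tau by auto
      have eq: "F \<tau> + e \<tau> / n = (-(S \<tau>) * v \<tau> + (1 - S \<tau>) * e \<tau>) / n"
        unfolding F_def v_def using n by (simp add: field_simps)
      have "0 \<le> -(S \<tau>) * v \<tau>" using S\<tau> v\<tau> by (simp add: mult_nonneg_nonpos)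
      moreover have "0 \<le> (1 - S \<tau>) * e \<tau>" using S\<tau> epos[of \<tau>] by simp
      ultimately show "0 \<le> F \<tau> + e \<tau> / n" unfolding eq using n by simp
    qed
    then show "v s \<le> v t'" by simp
  qed
  then show "m T \<ge> m0 * exp (-(T - 0)/n)" using T unfolding v_def e_def by auto
  have decay: "v t \<ge> v a * exp (-(t - a)/n)" if a: "a \<in> {0..T}" and t: "t \<in> {a..T}" for a t
  proof -
    define r where "r \<tau> = v \<tau> - v a * exp (-(\<tau> - a)/n)" for \<tau>
    have rcont: "continuous_on {a..T} r" unfolding r_def
      by (intro continuous_intros continuous_on_subset[OF vcont]) (use a n in auto)
    have "r t \<ge> 0"
    proof (rule comparison_nonneg[OF rcont _ _ t])
      show "0 \<le> r a" unfolding r_def by simp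
      fix s t' assume st: "a \<le> s" "s \<le> t'" "t' \<le> T" and le: "\<forall>\<tau>\<in>{s..t'}. r \<tau> \<le> 0"
      have st0: "0 \<le> s" using st a by auto
      have "((\<lambda>\<tau>. (F \<tau> + e \<tau> / n) - (-(1/n) * (v a * exp (-(\<tau> - a)/n)))) has_integral
             ((v t' - v s) - (v a * exp (-(t' - a)/n) - v a * exp (-(s - a)/n)))) {s..t'}"
        by (rule has_integral_diff[OF vint[OF st0 st(2) st(3)] exp_integral[OF st(2) n]])
      then have I: "((\<lambda>\<tau>. (F \<tau> + e \<tau> / n) - (-(1/n) * (v a * exp (-(\<tau> - a)/n)))) has_integral
             (r t' - r s)) {s..t'}" unfolding r_def by (simp add: algebra_simps)
      have "0 \<le> r t' - r s"
      proof (rule has_integral_nonneg[OF I])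
        fix \<tau> assume tau: "\<tau> \<in> {s..t'}"
        have tT: "\<tau> \<in> {0..T}" using tau st a by auto
        have S\<tau>: "0 \<le> S \<tau>" "S \<tau> \<le> 1" using S[OF tT] by auto
        have r\<tau>: "r \<tau> \<le> 0" using le tau by auto
        have mnn: "m \<tau> \<ge> 0" using vnn[OF tT] epos[of \<tau>] unfolding v_def by simp
        have "S \<tau> * m \<tau> \<le> m \<tau>" using S\<tau> mnn by (simp add: mult_left_le_one_le)
        then have "F \<tau> \<ge> - m \<tau> / n" unfolding F_def using n by (simp add: field_simps)
        moreover have "(F \<tau> + e \<tau> / n) - (-(1/n) * (v a * exp (-(\<tau> - a)/n))) - (- r \<tau> / n) = F \<tau> + m \<tau> / n"
          unfolding r_def v_def using n by (simp add: field_simps)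
        ultimately have "(F \<tau> + e \<tau> / n) - (-(1/n) * (v a * exp (-(\<tau> - a)/n))) \<ge> - r \<tau> / n"
          by linarith
        moreover have "- r \<tau> / n \<ge> 0" using r\<tau> n by (simp add: divide_nonpos_pos)
        ultimately show "0 \<le> (F \<tau> + e \<tau> / n) - (-(1/n) * (v a * exp (-(\<tau> - a)/n)))" by linarith
      qed
      then show "r s \<le> r t'" by simp
    qed
    then show ?thesis unfolding r_def by simp
  qed
  assume eqT: "m T = m0 * exp (-(T - 0)/n)"
  have vT: "v T = 0" using eqT unfolding v_def e_def by simp
  have vz: "v a = 0" if a: "a \<in> {0..T}" for a
  proof -
    have "0 \<ge> v a * exp (-(T - a)/n)" using decay[OF a, of T] a vT by auto
    then have "v a \<le> 0" by (simp add: mult_le_0_iff)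
    with vnn[OF a] show ?thesis by simp
  qed
  define h where "h \<tau> = (1 - S \<tau>) * e \<tau> / n" for \<tau>
  have hint: "(h has_integral 0) {0..T}"
  proof -
    have "((\<lambda>\<tau>. F \<tau> + e \<tau> / n) has_integral (v T - v 0)) {0..T}" by (rule vint) (use T in auto)
    then have "((\<lambda>\<tau>. F \<tau> + e \<tau> / n) has_integral 0) {0..T}" using vT v0 by simp
    then show ?thesis
    proof (rule has_integral_eq[rotated])
      fix x assume x: "x \<in> {0..T}"
      have "m x = e x" using vz[OF x] unfolding v_def by simp
      then show "F x + e x / n = h x" unfolding F_def h_def using n by (simp add: field_simps)
    qed
  qed
  have hnn: "0 \<le> h x" if "x \<in> {0..T}" for x
    using S[OF that] epos[of x] n unfolding h_def by simp
  have af: "h absolutely_integrable_on {0..T}"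
    using hnn has_integral_integrable[OF hint]
    by (intro absolutely_integrable_onI) (auto intro: integrable_eq[OF has_integral_integrable[OF hint]])
  have "0 = integral {0..T} h" using hint by (simp add: integral_unique)
  also have "integral {0..T} h = set_lebesgue_integral lebesgue {0..T} h"
    using af by (intro set_lebesgue_integral_eq_integral(2)[symmetric])
  finally have "set_lebesgue_integral lebesgue {0..T} h = 0" by simp
  then have "(AE x in lebesgue. indicator {0..T} x *\<^sub>R h x = 0)"
    unfolding set_lebesgue_integral_def
    by (subst (asm) integral_nonneg_eq_0_iff_AE)
       (use af hnn in \<open>auto simp: set_integrable_def indicator_def\<close>)
  then have "AE x in lebesgue. x \<in> {0..T} \<longrightarrow> S x = 1"
  proof (rule AE_mp[OF _ AE_I2], intro impI)
    fix x assume "indicator {0..T} x *\<^sub>R h x = 0" "x \<in> {0..T}"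
    then have "h x = 0" by simp
    then show "S x = 1" using epos[of x] n unfolding h_def by simp
  qed
  then show "AE \<tau> in lebesgue_on {0..T}. S \<tau> = 1"
    by (subst AE_restrict_space_iff) auto
qed

lemma traj_mean:
  assumes N: "N > 0" and tr: "is_traj N T \<alpha> x0 \<xi>" and t: "t \<in> {0..T}"
  shows "((\<lambda>\<tau>. -((\<Sum>i=1..N. \<alpha> \<tau> i) / real N) * xbar N (\<xi> \<tau>)) has_integral
           (xbar N (\<xi> t) - xbar N (\<xi> 0))) {0..t}"
proof -
  have hi: "\<And>i. i \<in> {1..N} \<Longrightarrow> ((\<lambda>s. - \<xi> s i + (1 - \<alpha> s i) * xbar N (\<xi> s)) has_integral (\<xi> t i - \<xi> 0 i)) {0..t}"
    using tr t unfolding is_traj_def by auto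
  have "((\<lambda>s. \<Sum>i=1..N. - \<xi> s i + (1 - \<alpha> s i) * xbar N (\<xi> s)) has_integral (\<Sum>i=1..N. \<xi> t i - \<xi> 0 i)) {0..t}"
    by (rule has_integral_sum) (use hi in blast)+
  then have "((\<lambda>s. (1 / real N) * (\<Sum>i=1..N. - \<xi> s i + (1 - \<alpha> s i) * xbar N (\<xi> s))) has_integral
      ((1 / real N) * (\<Sum>i=1..N. \<xi> t i - \<xi> 0 i))) {0..t}"
    by (rule has_integral_mult_right)
  moreover have "(1 / real N) * (\<Sum>i=1..N. \<xi> t i - \<xi> 0 i) = xbar N (\<xi> t) - xbar N (\<xi> 0)"
    unfolding xbar_def by (simp add: sum_subtractf diff_divide_distrib)
  moreover have "(1 / real N) * (\<Sum>i=1..N. - \<xi> s i + (1 - \<alpha> s i) * xbar N (\<xi> s))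
        = -((\<Sum>i=1..N. \<alpha> s i) / real N) * xbar N (\<xi> s)" for s
  proof -
    have "(\<Sum>i=1..N. - \<xi> s i + (1 - \<alpha> s i) * xbar N (\<xi> s))
        = - (\<Sum>i=1..N. \<xi> s i) + real N * xbar N (\<xi> s) - (\<Sum>i=1..N. \<alpha> s i) * xbar N (\<xi> s)"
      by (simp add: sum.distrib sum_subtractf sum_negf sum_distrib_right sum_distrib_left algebra_simps)
    also have "(\<Sum>i=1..N. \<xi> s i) = real N * xbar N (\<xi> s)" unfolding xbar_def using N by simp
    finally show ?thesis using N by (simp add: field_simps)
  qed
  ultimately show ?thesis by simp
qed

lemma cost_decomp:
  assumes N: "N > 0"
  shows "cost N T \<xi> = (xbar N (\<xi> T))\<^sup>2 + (\<Sum>i=1..N. (\<xi> T i - xbar N (\<xi> T))\<^sup>2) / real N"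
proof -
  define m where "m = xbar N (\<xi> T)"
  have sm: "(\<Sum>i=1..N. \<xi> T i) = real N * m" unfolding m_def xbar_def using N by simp
  have "(\<Sum>i=1..N. (\<xi> T i - m)\<^sup>2) = (\<Sum>i=1..N. (\<xi> T i)\<^sup>2) - 2 * m * (\<Sum>i=1..N. \<xi> T i) + real N * m\<^sup>2"
    by (simp add: power2_diff sum.distrib sum_subtractf sum_distrib_left mult.commute mult.left_commute)
  also have "\<dots> = (\<Sum>i=1..N. (\<xi> T i)\<^sup>2) - real N * m\<^sup>2" unfolding sm by (simp add: power2_eq_square)
  finally show ?thesis unfolding cost_def m_def[symmetric] using N by (simp add: field_simps)
qed

lemma construction:
  fixes N :: nat and T :: real and x0 :: "nat \<Rightarrow> real"
  assumes N2: "N \<ge> 2" and T: "T > 0"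
    and m0: "xbar N x0 > 0"
    and ord: "\<And>i j. 1 \<le> i \<Longrightarrow> i \<le> j \<Longrightarrow> j \<le> N \<Longrightarrow> x0 j \<le> x0 i"
    and thr: "T \<ge> real N / (real N - 1) *
           ln ((real N - 1)\<^sup>2 / real N *
               (((\<Sum>i=1..N-1. x0 i) / (real N - 1) - x0 N) / xbar N x0) + 1)"
  shows "\<exists>\<beta> \<eta>. admissible N T \<beta> \<and> is_traj N T \<beta> x0 \<eta> \<and>
            cost N T \<eta> = (xbar N x0 * exp (-(T - 0)/real N))\<^sup>2"
proof -
  define n where "n = real N"
  define M where "M = xbar N x0"
  have n1: "n > 1" using N2 unfolding n_def by simp
  have Mpos: "M > 0" using m0 unfolding M_def .
  define xN where "xN = x0 N"
  have sumx: "(\<Sum>i=1..N. x0 i) = n * M" unfolding M_def xbar_def n_def using N2 by simp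
  have sumx1: "(\<Sum>i=1..N-1. x0 i) = n * M - xN"
  proof -
    have "N = Suc (N - 1)" using N2 by simp
    then have "(\<Sum>i=1..N. x0 i) = (\<Sum>i=1..N-1. x0 i) + x0 N"
    proof -
      have "{1..N} = insert N {1..N-1}" using N2 by auto
      moreover have "N \<notin> {1..N-1}" using N2 by auto
      ultimately show ?thesis by (simp add: add.commute)
    qed
    then show ?thesis using sumx unfolding xN_def by simp
  qed
  have xle: "xN \<le> x0 i" if "i \<in> {1..N}" for i using ord[of i N] that unfolding xN_def by auto
  have "n * xN \<le> n * M"
  proof -
    have "(\<Sum>i=1..N. xN) \<le> (\<Sum>i=1..N. x0 i)" by (rule sum_mono) (use xle in auto)
    then show ?thesis using sumx unfolding n_def by simp
  qed
  then have MxN: "xN \<le> M" using n1 by simp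
  define L where "L = (n - 1)\<^sup>2 / n * (((\<Sum>i=1..N-1. x0 i) / (n - 1) - xN) / M) + 1"
  have Leq: "L = (n - 1) * (M - xN) / M + 1"
    unfolding L_def sumx1 using n1 Mpos by (simp add: field_simps power2_eq_square)
  have "(n - 1) * (M - xN) / M \<ge> 0" using n1 Mpos MxN by simp
  then have Lpos: "L > 0" unfolding Leq by linarith
  have thr': "T \<ge> n / (n - 1) * ln L" using thr unfolding L_def n_def M_def xN_def .
  define E where "E = exp (T * (n - 1) / n)"
  have "ln L \<le> T * (n - 1) / n" using thr' n1 by (simp add: field_simps)
  then have EL: "E \<ge> L" unfolding E_def using Lpos by (metis exp_le_cancel_iff exp_ln)
  have E1: "E > 1" unfolding E_def using T n1 by simp
  define K where "K = n / (n - 1)"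
  define W where "W = M * K * (E - 1)"
  have Wpos: "W > 0" unfolding W_def K_def using Mpos n1 E1 by simp
  have Wn: "W / n = M * (E - 1) / (n - 1)" unfolding W_def K_def using n1 by (simp add: field_simps)
  have Wbig: "W / n \<ge> M - xN"
  proof -
    have "E - 1 \<ge> (n - 1) * (M - xN) / M" using EL Leq by simp
    then have "M * (E - 1) \<ge> (n - 1) * (M - xN)" using Mpos by (simp add: field_simps)
    then show ?thesis unfolding Wn using n1 by (simp add: field_simps)
  qed
  define c where "c i = (x0 i - M + W / n) / W" for i
  have cnn: "c i \<ge> 0" if "i \<in> {1..N}" for i
    unfolding c_def using xle[OF that] Wbig Wpos by simp
  have csum: "(\<Sum>i=1..N. c i) = 1"
  proof -
    have "(\<Sum>i=1..N. c i) = (\<Sum>i=1..N. x0 i - M + W / n) / W" unfolding c_def by (simp add: sum_divide_distrib)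
    also have "(\<Sum>i=1..N. x0 i - M + W / n) = W"
      using sumx n1 unfolding n_def by (simp add: sum.distrib sum_subtractf)
    finally show ?thesis using Wpos by simp
  qed
  have cle: "c i \<le> 1" if "i \<in> {1..N}" for i
  proof -
    have "c i \<le> (\<Sum>j=1..N. c j)" by (rule member_le_sum) (use that cnn in auto)
    then show ?thesis using csum by simp
  qed
  define \<beta> where "\<beta> t i = c i" for t :: real and i
  have adm: "admissible N T \<beta>"
    unfolding admissible_def \<beta>_def using cnn cle csum by auto
  define \<eta> where "\<eta> t i = exp (-t) * x0 i + (1 - c i) * M * K * (exp (-t/n) - exp (-t))" for t i
  have sum1c: "(\<Sum>i=1..N. 1 - c i) = n - 1" using csum unfolding n_def by (simp add: sum_subtractf)
  have xbar_eta: "xbar N (\<eta> s) = M * exp (-(s - 0)/n)" for s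
  proof -
    have "(\<Sum>i=1..N. \<eta> s i) = exp (-s) * (\<Sum>i=1..N. x0 i) + (\<Sum>i=1..N. 1 - c i) * (M * K * (exp (-s/n) - exp (-s)))"
      unfolding \<eta>_def by (simp add: sum.distrib sum_distrib_left sum_distrib_right mult.assoc)
    also have "\<dots> = n * (M * exp (-s/n))" unfolding sumx sum1c K_def using n1 by (simp add: field_simps)
    finally show ?thesis unfolding xbar_def n_def using n1 unfolding n_def by simp
  qed
  have tr: "is_traj N T \<beta> x0 \<eta>"
    unfolding is_traj_def
  proof safe
    fix i assume "i \<in> {1..N}" show "\<eta> 0 i = x0 i" unfolding \<eta>_def by simp
  next
    fix i t assume i: "i \<in> {1..N}" and t: "t \<in> {0..T}"
    have "((\<lambda>s. -(exp (-s) * x0 i) + (1 - c i) * M * K * (-(1/n) * exp (-s/n) + exp (-s))) has_integral (\<eta> t i - \<eta> 0 i)) {0..t}"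
      unfolding \<eta>_def
    proof (rule fundamental_theorem_of_calculus)
      show "0 \<le> t" using t by simp
      fix x assume "x \<in> {0..t}"
      show "((\<lambda>t. exp (-t) * x0 i + (1 - c i) * M * K * (exp (-t/n) - exp (-t))) has_vector_derivative
         (-(exp (-x) * x0 i) + (1 - c i) * M * K * (-(1/n) * exp (-x/n) + exp (-x)))) (at x within {0..t})"
        unfolding has_real_derivative_iff_has_vector_derivative[symmetric]
        using n1 by (auto intro!: derivative_eq_intros simp: field_simps)
    qed
    then show "((\<lambda>s. - \<eta> s i + (1 - \<beta> s i) * xbar N (\<eta> s)) has_integral (\<eta> t i - \<eta> 0 i)) {0..t}"
    proof (rule has_integral_eq[rotated])
      fix s
      show "-(exp (-s) * x0 i) + (1 - c i) * M * K * (-(1/n) * exp (-s/n) + exp (-s)) =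
            - \<eta> s i + (1 - \<beta> s i) * xbar N (\<eta> s)"
        unfolding xbar_eta \<eta>_def \<beta>_def K_def using n1 by (simp add: field_simps)
    qed
  qed
  have etaT: "\<eta> T i = M * exp (-(T - 0)/n)" if i: "i \<in> {1..N}" for i
  proof -
    define e1 where "e1 = exp (-T/n)"
    have e1pos: "e1 > 0" unfolding e1_def by simp
    have eT: "exp (-T) = e1 / E" unfolding e1_def E_def using n1
      by (simp add: exp_minus[symmetric] exp_diff[symmetric] field_simps)
    have cW: "c i * W = x0 i - M + W / n" unfolding c_def using Wpos by simp
    have WE: "W * (n - 1) / n = M * (E - 1)" unfolding W_def K_def using n1 by (simp add: field_simps)
    have key: "x0 i + (1 - c i) * W = M * E"
    proof -
      have "x0 i + (1 - c i) * W = M + W * (n - 1) / n" using cW n1 by (simp add: field_simps)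
      also have "\<dots> = M * E" unfolding WE by (simp add: algebra_simps)
      finally show ?thesis .
    qed
    have "\<eta> T i = (e1 / E) * (x0 i + (1 - c i) * (M * K * (E - 1)))"
      unfolding \<eta>_def eT e1_def[symmetric] using E1 by (simp add: field_simps)
    also have "\<dots> = e1 * M" using key E1 unfolding W_def by (simp add: field_simps)
    finally show ?thesis unfolding e1_def by simp
  qed
  have "cost N T \<eta> = (M * exp (-(T - 0)/n))\<^sup>2"
    unfolding cost_def using etaT n1 unfolding n_def by simp
  with adm tr show ?thesis unfolding M_def n_def by blast
qed

theorem theorem6:
  fixes N :: nat and T :: real and x0 :: "nat \<Rightarrow> real" and \<alpha> :: "real \<Rightarrow> nat \<Rightarrow> real"
  assumes "N \<ge> 2" and "T > 0"
    and "xbar N x0 > 0"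
    and "\<And>i j. 1 \<le> i \<Longrightarrow> i \<le> j \<Longrightarrow> j \<le> N \<Longrightarrow> x0 j \<le> x0 i"
    and "T \<ge> real N / (real N - 1) *
           ln ((real N - 1)\<^sup>2 / real N *
               (((\<Sum>i=1..N-1. x0 i) / (real N - 1) - x0 N) / xbar N x0) + 1)"
    and "optimal_control N T x0 \<alpha>"
  shows "(AE t in lebesgue_on {0..T}. (\<Sum>i=1..N. \<alpha> t i) = 1) \<and>
         (\<forall>\<xi>. is_traj N T \<alpha> x0 \<xi> \<longrightarrow> (\<forall>i\<in>{1..N}. \<xi> T i = xbar N (\<xi> T)))"
proof -
  have N0: "N > 0" using assms(1) by simp
  have nR: "real N > 0" using N0 by simp
  define M where "M = xbar N x0"
  define eT where "eT = M * exp (-(T - 0)/real N)"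
  have eTpos: "eT > 0" unfolding eT_def M_def using assms(3) by simp
  obtain \<beta> \<eta> where adm\<beta>: "admissible N T \<beta>" and tr\<eta>: "is_traj N T \<beta> x0 \<eta>"
    and cost\<eta>: "cost N T \<eta> = eT\<^sup>2"
    using construction[OF assms(1-5)] unfolding eT_def M_def by blast
  have adm: "admissible N T \<alpha>" and ex: "\<exists>\<xi>. is_traj N T \<alpha> x0 \<xi>"
    and opt: "\<And>\<xi>. is_traj N T \<alpha> x0 \<xi> \<Longrightarrow> cost N T \<xi> \<le> cost N T \<eta>"
    using assms(6) adm\<beta> tr\<eta> unfolding optimal_control_def by blast+
  have Sb: "0 \<le> (\<Sum>i=1..N. \<alpha> \<tau> i) \<and> (\<Sum>i=1..N. \<alpha> \<tau> i) \<le> 1" if "\<tau> \<in> {0..T}" for \<tau>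
    using adm that unfolding admissible_def by (auto intro: sum_nonneg)
  have scal: "xbar N (\<xi> T) \<ge> M * exp (-(T - 0)/real N)"
     "xbar N (\<xi> T) = M * exp (-(T - 0)/real N) \<Longrightarrow>
        (AE \<tau> in lebesgue_on {0..T}. (\<Sum>i=1..N. \<alpha> \<tau> i) = 1)"
    if tr: "is_traj N T \<alpha> x0 \<xi>" for \<xi>
  proof -
    have m00: "xbar N (\<xi> 0) = M"
    proof -
      have "\<forall>i\<in>{1..N}. \<xi> 0 i = x0 i" using tr unfolding is_traj_def by blast
      then have "(\<Sum>i=1..N. \<xi> 0 i) = (\<Sum>i=1..N. x0 i)" by (intro sum.cong) auto
      then show ?thesis unfolding M_def xbar_def by simp
    qed
    note SL = scalar_lemma[of "real N" T M "\<lambda>\<tau>. \<Sum>i=1..N. \<alpha> \<tau> i" "\<lambda>\<tau>. xbar N (\<xi> \<tau>)",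
        OF nR assms(2) assms(3)[folded M_def] Sb m00 traj_mean[OF N0 tr]]
    show "xbar N (\<xi> T) \<ge> M * exp (-(T - 0)/real N)" by (rule SL(1))
    show "xbar N (\<xi> T) = M * exp (-(T - 0)/real N) \<Longrightarrow>
        (AE \<tau> in lebesgue_on {0..T}. (\<Sum>i=1..N. \<alpha> \<tau> i) = 1)" by (rule SL(2))
  qed
  have key: "xbar N (\<xi> T) = eT \<and> (\<forall>i\<in>{1..N}. \<xi> T i = xbar N (\<xi> T))"
    if tr: "is_traj N T \<alpha> x0 \<xi>" for \<xi>
  proof -
    define mT where "mT = xbar N (\<xi> T)"
    define D where "D = (\<Sum>i=1..N. (\<xi> T i - mT)\<^sup>2)"
    have Dnn: "D \<ge> 0" unfolding D_def by (auto intro: sum_nonneg)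
    have lo: "mT \<ge> eT" using scal(1)[OF tr] unfolding mT_def eT_def .
    have c1: "mT\<^sup>2 + D / real N \<le> eT\<^sup>2"
      using opt[OF tr] cost\<eta> cost_decomp[OF N0, of T \<xi>] unfolding mT_def D_def by simp
    have sq: "eT\<^sup>2 \<le> mT\<^sup>2" using lo eTpos by (simp add: power_mono)
    have "D / real N \<ge> 0" using Dnn nR by simp
    then have "D / real N = 0" "mT\<^sup>2 \<le> eT\<^sup>2" using c1 sq by linarith+
    then have D0: "D = 0" and "mT \<le> eT" using nR eTpos by (auto intro: power2_le_imp_le)
    then have mTeq: "mT = eT" using lo by simp
    have "\<forall>i\<in>{1..N}. (\<xi> T i - mT)\<^sup>2 = 0"
      using D0 unfolding D_def by (subst (asm) sum_nonneg_eq_0_iff) auto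
    then show ?thesis using mTeq unfolding mT_def by simp
  qed
  obtain \<xi>0 where tr0: "is_traj N T \<alpha> x0 \<xi>0" using ex by blast
  have "AE \<tau> in lebesgue_on {0..T}. (\<Sum>i=1..N. \<alpha> \<tau> i) = 1"
    by (rule scal(2)[OF tr0]) (use key[OF tr0] in \<open>simp add: eT_def\<close>)
  with key show ?thesis by blast
qed

end
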